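(* Let $\mathbb{F}$ be an infinite field and $n\ge2$. Then any two $2$-maximal nilpotent subsemigroups of $M(n,\mathbb{F})$ are isomorphic as semigroups.
   Context: $M(n,\mathbb{F})$ is the semigroup of $n\times n$ matrices over $\mathbb{F}$ under multiplication. A semigroup $S$ with zero is nilpotent of nilpotency degree $k$ if all products of $k$ elements of $S$ equal $0$ and some product of $k-1$ elements is nonzero. A nilpotent subsemigroup of $M(n,\mathbb{F})$ of nilpotency degree $k$ is $k$-maximal if it is not properly contained in another nilpotent subsemigroup of $M(n,\mathbb{F})$ of nilpotency degree $k$. *)

theory Defs
  imports "HOL-Analysis.Analysis"
begin

text \<open>Square matrices over a field, indexed by a finite type 'n (so n = CARD('n)).
  The semigroup operation is matrix multiplication (**).\<close>

definition msubsemigroup :: "('a::semiring_1 ^'n^'n) set \<Rightarrow> bool" where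
  "msubsemigroup S \<longleftrightarrow> (\<forall>A\<in>S. \<forall>B\<in>S. A ** B \<in> S)"

definition mprod :: "('a::semiring_1 ^'n^'n) list \<Rightarrow> 'a^'n^'n" where
  "mprod xs = foldr (**) xs (mat 1)"

definition nilpotent_of_degree :: "('a::semiring_1 ^'n^'n) set \<Rightarrow> nat \<Rightarrow> bool" where
  "nilpotent_of_degree S k \<longleftrightarrow>
     msubsemigroup S \<and> 0 \<in> S \<and>
     (\<forall>xs. length xs = k \<and> set xs \<subseteq> S \<longrightarrow> mprod xs = 0) \<and>
     (\<exists>xs. length xs = k - 1 \<and> set xs \<subseteq> S \<and> mprod xs \<noteq> 0)"

definition k_maximal :: "('a::semiring_1 ^'n^'n) set \<Rightarrow> nat \<Rightarrow> bool" where
  "k_maximal S k \<longleftrightarrow> nilpotent_of_degree S k \<and>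
     (\<forall>T. nilpotent_of_degree T k \<and> S \<subseteq> T \<longrightarrow> T = S)"

definition semigroup_isomorphic :: "('a::semiring_1 ^'n^'n) set \<Rightarrow> ('a^'n^'n) set \<Rightarrow> bool" where
  "semigroup_isomorphic S T \<longleftrightarrow>
     (\<exists>f. bij_betw f S T \<and> (\<forall>x\<in>S. \<forall>y\<in>S. f (x ** y) = f x ** f y))"

end

theory Submission
  imports Defs "HOL-Library.Equipollence" "HOL-Combinatorics.Transposition"
begin

lemma times_self_eqpoll: "infinite A \<Longrightarrow> A \<times> A \<approx> A"
  unfolding eqpoll_iff_card_of_ordIso using card_of_Times_same_infinite by blast

lemma PiE_lepoll_infinite:
  assumes "finite I" "infinite A"
  shows "(I \<rightarrow>\<^sub>E A) \<lesssim> A"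
  using assms(1)
proof (induction I rule: finite_induct)
  case empty
  obtain a where "a \<in> A" using assms(2) by (metis ex_in_conv finite.emptyI)
  then show ?case unfolding lepoll_def
    by (intro exI[of _ "\<lambda>_. a"]) auto
next
  case (insert i I)
  have "(insert i I \<rightarrow>\<^sub>E A) \<lesssim> A \<times> (I \<rightarrow>\<^sub>E A)"
    unfolding lepoll_def
  proof (intro exI[of _ "\<lambda>f. (f i, f(i:=undefined))"] conjI)
    show "inj_on (\<lambda>f. (f i, f(i := undefined))) (insert i I \<rightarrow>\<^sub>E A)"
      by (rule inj_onI) (metis fun_upd_triv fun_upd_upd prod.inject)
    show "(\<lambda>f. (f i, f(i := undefined))) ` (insert i I \<rightarrow>\<^sub>E A) \<subseteq> A \<times> (I \<rightarrow>\<^sub>E A)"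
      using insert.hyps(2) by (auto simp: PiE_def Pi_def extensional_def)
  qed
  also have "A \<times> (I \<rightarrow>\<^sub>E A) \<lesssim> A \<times> A"
    by (rule times_lepoll_mono) (auto simp: insert.IH lepoll_refl)
  also have "A \<times> A \<approx> A" using assms(2) by (rule times_self_eqpoll)
  finally show ?case .
qed

lemma matrices_lepoll:
  assumes "infinite (UNIV :: 'a set)"
  shows "(UNIV :: ('a ^'n::finite^'n) set) \<lesssim> (UNIV :: 'a set)"
proof -
  have "(UNIV :: ('a ^'n::finite^'n) set) \<lesssim> ((UNIV :: ('n \<times> 'n) set) \<rightarrow>\<^sub>E (UNIV :: 'a set))"
    unfolding lepoll_def
  proof (intro exI[of _ "\<lambda>M. (\<lambda>(i,j). M$i$j)"] conjI)
    show "inj_on (\<lambda>M. (\<lambda>(i,j). M$i$j)) (UNIV :: ('a ^'n::finite^'n) set)"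
      by (rule inj_onI) (simp add: vec_eq_iff fun_eq_iff)
  qed auto
  also have "\<dots> \<lesssim> (UNIV :: 'a set)"
    by (rule PiE_lepoll_infinite) (auto simp: assms)
  finally show ?thesis .
qed

definition sc :: "'a::field \<Rightarrow> 'a^'n::finite^'n \<Rightarrow> 'a^'n^'n" where
  "sc c A = (\<chi> i j. c * A$i$j)"

lemma sc_mult: "sc c A ** sc d B = sc (c*d) (A ** B)"
  by (simp add: sc_def matrix_matrix_mult_def vec_eq_iff sum_distrib_left mult_ac)

lemma sc_zero: "sc c 0 = 0"
  by (simp add: sc_def vec_eq_iff)

lemma sc_one: "sc 1 A = A"
  by (simp add: sc_def vec_eq_iff)

lemma mprod_single: "mprod [x] = (x::'a::field^'n::finite^'n)"
  by (simp add: mprod_def)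

lemma mprod_two: "mprod [x, y] = (x::'a::field^'n::finite^'n) ** y"
  by (simp add: mprod_def)

lemma nil2_iff:
  fixes S :: "('a::field ^'n::finite^'n) set"
  shows "nilpotent_of_degree S 2 \<longleftrightarrow>
    (\<forall>x\<in>S. \<forall>y\<in>S. x ** y \<in> S) \<and> 0 \<in> S \<and> (\<forall>x\<in>S. \<forall>y\<in>S. x ** y = 0) \<and> (\<exists>A\<in>S. A \<noteq> 0)"
proof -
  have a: "(\<forall>xs. length xs = 2 \<and> set xs \<subseteq> S \<longrightarrow> mprod xs = 0) \<longleftrightarrow> (\<forall>x\<in>S. \<forall>y\<in>S. x ** y = 0)"
  proof
    assume H: "\<forall>xs. length xs = 2 \<and> set xs \<subseteq> S \<longrightarrow> mprod xs = 0"
    show "\<forall>x\<in>S. \<forall>y\<in>S. x ** y = 0"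
      using H[rule_format, of "[_,_]"] by (auto simp: mprod_two)
  next
    assume H: "\<forall>x\<in>S. \<forall>y\<in>S. x ** y = 0"
    show "\<forall>xs. length xs = 2 \<and> set xs \<subseteq> S \<longrightarrow> mprod xs = 0"
    proof (intro allI impI)
      fix xs :: "('a^'n^'n) list" assume "length xs = 2 \<and> set xs \<subseteq> S"
      then obtain x y where "xs = [x,y]" "x \<in> S" "y \<in> S"
        by (cases xs; cases "tl xs") auto
      then show "mprod xs = 0" using H by (simp add: mprod_two)
    qed
  qed
  have b: "(\<exists>xs. length xs = 2 - 1 \<and> set xs \<subseteq> S \<and> mprod xs \<noteq> 0) \<longleftrightarrow> (\<exists>A\<in>S. A \<noteq> 0)"
  proof
    assume "\<exists>xs. length xs = 2 - 1 \<and> set xs \<subseteq> S \<and> mprod xs \<noteq> 0"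
    then obtain xs where "length xs = 1" "set xs \<subseteq> S" "mprod xs \<noteq> 0" by auto
    then obtain x where "xs = [x]" by (cases xs) auto
    then show "\<exists>A\<in>S. A \<noteq> 0" using \<open>set xs \<subseteq> S\<close> \<open>mprod xs \<noteq> 0\<close> by (auto simp: mprod_single)
  next
    assume "\<exists>A\<in>S. A \<noteq> 0"
    then obtain A where "A \<in> S" "A \<noteq> 0" by auto
    then show "\<exists>xs. length xs = 2 - 1 \<and> set xs \<subseteq> S \<and> mprod xs \<noteq> 0"
      by (intro exI[of _ "[A]"]) (simp add: mprod_single)
  qed
  show ?thesis unfolding nilpotent_of_degree_def msubsemigroup_def a b by blast
qed

lemma max_scaled:
  fixes S :: "('a::field ^'n::finite^'n) set"
  assumes "k_maximal S 2" "A \<in> S"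
  shows "sc c A \<in> S"
proof -
  have N: "nilpotent_of_degree S 2" using assms(1) k_maximal_def by blast
  define T where "T = {sc c A | c A. A \<in> S}"
  have ST: "S \<subseteq> T" unfolding T_def using sc_one by (metis (mono_tags, lifting) mem_Collect_eq subsetI)
  have "nilpotent_of_degree T 2"
    unfolding nil2_iff
  proof (intro conjI)
    show "\<forall>x\<in>T. \<forall>y\<in>T. x ** y \<in> T" using N unfolding nil2_iff T_def
      by (auto simp: sc_mult sc_zero) (metis sc_zero)
    show "(0::'a^'n^'n) \<in> T" using N ST unfolding nil2_iff by auto
    show "\<forall>x\<in>T. \<forall>y\<in>T. x ** y = 0" using N unfolding nil2_iff T_def
      by (auto simp: sc_mult sc_zero)
    show "\<exists>A\<in>T. A \<noteq> 0" using N ST unfolding nil2_iff by auto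
  qed
  then have "T = S" using assms(1) ST unfolding k_maximal_def by blast
  then show ?thesis using assms(2) unfolding T_def by blast
qed

lemma max_eqpoll:
  fixes S :: "('a::field ^'n::finite^'n) set"
  assumes "infinite (UNIV :: 'a set)" "k_maximal S 2"
  shows "S \<approx> (UNIV :: 'a set)"
proof (rule lepoll_antisym)
  show "S \<lesssim> (UNIV :: 'a set)"
    by (rule lepoll_trans[OF subset_imp_lepoll[OF subset_UNIV] matrices_lepoll[OF assms(1)]])
  obtain A where A: "A \<in> S" "A \<noteq> 0"
  proof -
    have "nilpotent_of_degree S 2" using assms(2) by (simp add: k_maximal_def)
    then have "\<exists>A\<in>S. A \<noteq> 0" by (simp only: nil2_iff)
    then show ?thesis using that by blast
  qed
  have "\<exists>i j. A$i$j \<noteq> 0" using A(2) by (simp add: vec_eq_iff)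
  then obtain i j where ij: "A$i$j \<noteq> 0" by blast
  show "(UNIV :: 'a set) \<lesssim> S"
    unfolding lepoll_def
  proof (intro exI[of _ "\<lambda>c. sc c A"] conjI)
    show "inj_on (\<lambda>c. sc c A) UNIV"
    proof (rule inj_onI)
      fix c d assume "sc c A = sc d A"
      then have "(sc c A)$i$j = (sc d A)$i$j" by simp
      then have "c * A$i$j = d * A$i$j" by (simp add: sc_def)
      then show "c = d" using ij by simp
    qed
    show "range (\<lambda>c. sc c A) \<subseteq> S" using max_scaled[OF assms(2) A(1)] by blast
  qed
qed

theorem corollary11:
  fixes S T :: "('a::field ^'n::finite^'n) set"
  assumes "infinite (UNIV :: 'a set)"
    and "CARD('n) \<ge> 2"
    and "k_maximal S 2" and "k_maximal T 2"
  shows "semigroup_isomorphic S T"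
proof -
  have "S \<approx> T" using max_eqpoll[OF assms(1) assms(3)] max_eqpoll[OF assms(1) assms(4)]
    by (meson eqpoll_sym eqpoll_trans)
  then obtain g where g: "bij_betw g S T" unfolding eqpoll_def by blast
  have NS: "nilpotent_of_degree S 2" and NT: "nilpotent_of_degree T 2"
    using assms(3,4) by (simp_all add: k_maximal_def)
  have S0: "0 \<in> S" and SS: "\<forall>x\<in>S. \<forall>y\<in>S. x ** y = 0" using NS unfolding nil2_iff by blast+
  have T0: "0 \<in> T" and TT: "\<forall>x\<in>T. \<forall>y\<in>T. x ** y = 0" using NT unfolding nil2_iff by blast+
  define f where "f = Transposition.transpose (g 0) 0 \<circ> g"
  have gT: "g 0 \<in> T" using g S0 bij_betwE by blast
  have fb: "bij_betw f S T" unfolding f_def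
    by (rule bij_betw_trans[OF g]) (simp add: gT T0)
  have f0: "f 0 = 0" by (simp add: f_def)
  show ?thesis unfolding semigroup_isomorphic_def
  proof (intro exI[of _ f] conjI ballI)
    show "bij_betw f S T" by (rule fb)
    fix x y assume "x \<in> S" "y \<in> S"
    then have "f x \<in> T" "f y \<in> T" using fb bij_betwE by blast+
    then show "f (x ** y) = f x ** f y"
      using SS TT \<open>x \<in> S\<close> \<open>y \<in> S\<close> f0 by simp
  qed
qed

end
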